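(* Let $\Omega\subset\mathbb{R}^n$ be a bounded open set, $A\subset\Omega$ a non-empty open set, and $\lambda>0$. Let $f(x)=\mathrm{dist}^2(x,A^c)$ and let $f^{-}_{\overline\Omega}:\overline\Omega\to\mathbb{R}$ equal $f$ on $\Omega$ and $\inf_\Omega f$ on $\partial\Omega$. Then for every $x\in\overline\Omega$, $$\mathcal{M}(\lambda;A^c)(x)=(1+\lambda)\Big(f^{-}_{\overline\Omega}(x)-C^l_{\lambda,\Omega}(f^{-}_{\overline\Omega})(x)\Big).$$
   Context: $A^c=\mathbb{R}^n\setminus A$; $\mathrm{dist}(x,B)=\inf_{y\in B}|x-y|$. For a nonempty closed set $F$, $\mathcal{M}(\lambda;F)(x)=(1+\lambda)\big(\mathrm{dist}^2(x;F)-C^l_\lambda(\mathrm{dist}^2(\cdot;F))(x)\big)$ for $x\in\mathbb{R}^n$, where $C^l_\lambda(g)(x)=\mathrm{co}[g+\lambda|\cdot|^2](x)-\lambda|x|^2$ and $\mathrm{co}$ is the convex envelope. For bounded $g:\overline\Omega\to\mathbb{R}$ and $x\in\overline\Omega$: $M_{\lambda,\Omega}(g)(x)=\inf_{y\in\overline\Omega}\{g(y)+\lambda|y-x|^2\}$, $M^{\lambda}_{\Omega}(g)(x)=\sup_{y\in\overline\Omega}\{g(y)-\lambda|y-x|^2\}$, and $C^l_{\lambda,\Omega}(g)(x)=M^{\lambda}_{\Omega}(M_{\lambda,\Omega}(g))(x)$. *)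

theory Defs
  imports "HOL-Analysis.Analysis"
begin

definition conv_env :: "('a::euclidean_space \<Rightarrow> real) \<Rightarrow> 'a \<Rightarrow> real" where
  "conv_env g x = (SUP h \<in> {h. convex_on UNIV h \<and> (\<forall>y. h y \<le> g y)}. h x)"

definition lower_comp :: "real \<Rightarrow> ('a::euclidean_space \<Rightarrow> real) \<Rightarrow> 'a \<Rightarrow> real" where
  "lower_comp lam g x = conv_env (\<lambda>y. g y + lam * (norm y)\<^sup>2) x - lam * (norm x)\<^sup>2"

definition dist2 :: "'a::euclidean_space set \<Rightarrow> 'a \<Rightarrow> real" where
  "dist2 F x = (infdist x F)\<^sup>2"

definition Mtrans :: "real \<Rightarrow> 'a::euclidean_space set \<Rightarrow> 'a \<Rightarrow> real" where
  "Mtrans lam F x = (1 + lam) * (dist2 F x - lower_comp lam (dist2 F) x)"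

definition lower_env :: "real \<Rightarrow> 'a::euclidean_space set \<Rightarrow> ('a \<Rightarrow> real) \<Rightarrow> 'a \<Rightarrow> real" where
  "lower_env lam \<Omega> g x = (INF y \<in> closure \<Omega>. g y + lam * (norm (y - x))\<^sup>2)"

definition upper_env :: "real \<Rightarrow> 'a::euclidean_space set \<Rightarrow> ('a \<Rightarrow> real) \<Rightarrow> 'a \<Rightarrow> real" where
  "upper_env lam \<Omega> g x = (SUP y \<in> closure \<Omega>. g y - lam * (norm (y - x))\<^sup>2)"

definition lower_comp_dom :: "real \<Rightarrow> 'a::euclidean_space set \<Rightarrow> ('a \<Rightarrow> real) \<Rightarrow> 'a \<Rightarrow> real" where
  "lower_comp_dom lam \<Omega> g x = upper_env lam \<Omega> (lower_env lam \<Omega> g) x"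

end

theory Submission imports Defs begin
lemma affine_convex: "convex_on UNIV (\<lambda>u::'a::euclidean_space. c + inner a u)"
  unfolding convex_on_def
proof (intro conjI ballI allI impI)
  fix x y :: 'a and u v :: real assume "u + v = 1"
  then have "c = u * c + v * c" by (metis distrib_right mult_1)
  then show "c + inner a (u *\<^sub>R x + v *\<^sub>R y) \<le> u * (c + inner a x) + v * (c + inner a y)"
    by (simp add: inner_add_right distrib_left)
qed simp

lemma affine_minorant:
  fixes h :: "'a::euclidean_space \<Rightarrow> real"
  assumes cv: "convex_on UNIV h" and e: "e > 0"
  shows "\<exists>a b. (\<forall>u. inner a u + b \<le> h u) \<and> h x - e < inner a x + b"
proof -
  let ?S = "epigraph UNIV h"
  have "convex ?S" using cv by (rule convex_epigraphI)
  have ch: "continuous_on UNIV h" using convex_on_continuous[OF open_UNIV cv] .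
  have "closed {p :: 'a \<times> real. h (fst p) \<le> snd p}"
    by (intro closed_Collect_le continuous_on_compose2[OF ch] continuous_intros) auto
  moreover have "?S = {p. h (fst p) \<le> snd p}" by (auto simp: epigraph_def)
  ultimately have "closed ?S" by simp
  have "(x, h x - e) \<notin> ?S" using e by (simp add: mem_epigraph)
  from separating_hyperplane_closed_point[OF \<open>convex ?S\<close> \<open>closed ?S\<close> this]
  obtain q b where q1: "inner q (x, h x - e) < b" and q2: "\<forall>p\<in>?S. inner q p > b" by blast
  obtain a1 t where qq: "q = (a1, t)" by (cases q)
  have q2': "inner a1 u + t * s > b" if "h u \<le> s" for u s
    using q2[rule_format, of "(u,s)"] that by (simp add: qq mem_epigraph)
  have q1': "inner a1 x + t * (h x - e) < b" using q1 by (simp add: qq)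
  have "inner a1 x + t * h x > b" using q2'[of x "h x"] by simp
  with q1' have "t * e > 0" by (simp add: algebra_simps)
  with e have t: "t > 0" by (simp add: zero_less_mult_iff)
  show ?thesis
  proof (intro exI conjI allI)
    fix u
    have "inner a1 u + t * h u > b" using q2'[of u "h u"] by simp
    then have "b - inner a1 u < t * h u" by simp
    then have "(b - inner a1 u) / t < h u" using t by (simp add: divide_less_eq mult.commute)
    then show "inner (- (1/t) *\<^sub>R a1) u + b / t \<le> h u"
      by (simp add: diff_divide_distrib)
  next
    have "t * (h x - e) < b - inner a1 x" using q1' by simp
    then have "h x - e < (b - inner a1 x) / t" using t by (simp add: less_divide_eq mult.commute)
    then show "h x - e < inner (- (1/t) *\<^sub>R a1) x + b / t"
      by (simp add: diff_divide_distrib)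
  qed
qed

lemma sq_expand:
  fixes z y :: "'a::euclidean_space"
  shows "(norm (z - y))\<^sup>2 = (norm z)\<^sup>2 - 2 * inner z y + (norm y)\<^sup>2"
  by (simp add: power2_norm_eq_inner inner_diff_left inner_diff_right inner_commute)

lemma quad_id:
  fixes z a :: "'a::euclidean_space" and lam :: real
  assumes "lam > 0"
  shows "lam * (norm (z - (1/(2*lam)) *\<^sub>R a))\<^sup>2 = lam * (norm z)\<^sup>2 - inner a z + (norm a)\<^sup>2 / (4*lam)"
proof -
  have E: "(norm (z - (1/(2*lam)) *\<^sub>R a))\<^sup>2 = (norm z)\<^sup>2 - 2*(1/(2*lam)) * inner z a + (1/(2*lam))\<^sup>2 * (norm a)\<^sup>2"
    unfolding sq_expand by (simp add: power_mult_distrib power_divide)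
  show ?thesis unfolding E using assms by (simp add: field_simps power2_eq_square inner_commute)
qed

lemma Mf_bdd:
  assumes "\<forall>z. f z \<ge> (0::real)" "lam > 0"
  shows "bdd_below (range (\<lambda>z. f z + lam * (norm (z - y))\<^sup>2))"
  using assms by (intro bdd_belowI[of _ 0]) auto

lemma Mf_le:
  assumes "\<forall>z. f z \<ge> (0::real)" "lam > 0"
  shows "(INF z. f z + lam * (norm (z - y))\<^sup>2) \<le> f x + lam * (norm (x - y))\<^sup>2"
  by (rule cINF_lower[OF Mf_bdd[OF assms]]) simp

lemma Mf_nonneg:
  assumes "\<forall>z. f z \<ge> (0::real)" "lam > 0"
  shows "(INF z. f z + lam * (norm (z - y))\<^sup>2) \<ge> 0"
  using assms by (intro cINF_greatest) auto

lemma G_bdd: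
  fixes f :: "'a::euclidean_space \<Rightarrow> real"
  assumes "\<forall>z. f z \<ge> 0" "lam > 0"
  shows "bdd_above ((\<lambda>y. (INF z. f z + lam * (norm (z - y))\<^sup>2) - lam * (norm (y - x))\<^sup>2) ` Y)"
proof (intro bdd_aboveI[of _ "f x"])
  fix r assume "r \<in> (\<lambda>y. (INF z. f z + lam * (norm (z - y))\<^sup>2) - lam * (norm (y - x))\<^sup>2) ` Y"
  then obtain y where r: "r = (INF z. f z + lam * (norm (z - y))\<^sup>2) - lam * (norm (y - x))\<^sup>2" by auto
  have "norm (x - y) = norm (y - x)" by (rule norm_minus_commute)
  then show "r \<le> f x" using Mf_le[OF assms, of y x] r by simp
qed

lemma prox:
  fixes f :: "'a::euclidean_space \<Rightarrow> real"
  assumes f0: "\<forall>z. f z \<ge> 0" and lam: "lam > 0"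
  shows "lower_comp lam f x = (SUP y. (INF z. f z + lam * (norm (z - y))\<^sup>2) - lam * (norm (y - x))\<^sup>2)"
proof -
  define Mf where "Mf y = (INF z. f z + lam * (norm (z - y))\<^sup>2)" for y
  define G where "G = (SUP y. Mf y - lam * (norm (y - x))\<^sup>2)"
  define g where "g y = f y + lam * (norm y)\<^sup>2" for y
  define H where "H = {h. convex_on UNIV h \<and> (\<forall>y. h y \<le> g y)}"
  have Gb: "bdd_above (range (\<lambda>y. Mf y - lam * (norm (y - x))\<^sup>2))"
    unfolding Mf_def by (rule G_bdd[OF f0 lam])
  have Hne: "H \<noteq> {}"
  proof -
    have "(\<lambda>_. 0) \<in> H" unfolding H_def g_def using f0 lam by (auto simp: convex_on_const)
    then show ?thesis by blast
  qed
  have Hb: "bdd_above ((\<lambda>h. h x) ` H)" unfolding H_def by (intro bdd_aboveI[of _ "g x"]) auto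
  have ce: "conv_env g x = (SUP h\<in>H. h x)" unfolding conv_env_def H_def by simp
  have "conv_env g x \<le> G + lam * (norm x)\<^sup>2"
    unfolding ce
  proof (rule cSUP_least[OF Hne])
    fix h assume "h \<in> H"
    then have cv: "convex_on UNIV h" and hg: "\<And>y. h y \<le> g y" unfolding H_def by auto
    show "h x \<le> G + lam * (norm x)\<^sup>2"
    proof (rule field_le_epsilon)
      fix e :: real assume "e > 0"
      from affine_minorant[OF cv this, of x] obtain a b where
        ab: "\<forall>u. inner a u + b \<le> h u" and abx: "h x - e < inner a x + b" by blast
      define y where "y = (1/(2*lam)) *\<^sub>R a"
      define c where "c = b + (norm a)\<^sup>2 / (4*lam)"
      have "c \<le> Mf y" unfolding Mf_def
      proof (rule cINF_greatest)
        fix z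
        have "inner a z + b \<le> f z + lam * (norm z)\<^sup>2" using ab hg[of z] unfolding g_def by (metis order_trans)
        then show "c \<le> f z + lam * (norm (z - y))\<^sup>2"
          unfolding y_def c_def quad_id[OF lam] by simp
      qed simp
      moreover have "Mf y - lam * (norm (y - x))\<^sup>2 \<le> G"
        unfolding G_def by (rule cSUP_upper[OF _ Gb]) simp
      moreover have "lam * (norm (y - x))\<^sup>2 = lam * (norm x)\<^sup>2 - inner a x + (norm a)\<^sup>2 / (4*lam)"
        unfolding y_def norm_minus_commute[of _ x] quad_id[OF lam] ..
      ultimately have "inner a x + b \<le> G + lam * (norm x)\<^sup>2" unfolding c_def by simp
      with abx show "h x \<le> G + lam * (norm x)\<^sup>2 + e" by simp
    qed
  qed
  moreover have "G + lam * (norm x)\<^sup>2 \<le> conv_env g x"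
  proof -
    have "Mf y - lam * (norm (y - x))\<^sup>2 \<le> conv_env g x - lam * (norm x)\<^sup>2" for y
    proof -
      define hy where "hy u = (Mf y - lam * (norm y)\<^sup>2) + inner ((2 * lam) *\<^sub>R y) u" for u
      have hyeq: "hy u = Mf y - lam * (norm (y - u))\<^sup>2 + lam * (norm u)\<^sup>2" for u
        unfolding hy_def sq_expand by (simp add: inner_commute algebra_simps)
      have "hy \<in> H" unfolding H_def
      proof (intro CollectI conjI allI)
        show "convex_on UNIV hy" unfolding hy_def by (rule affine_convex)
        fix u
        have "Mf y \<le> f u + lam * (norm (u - y))\<^sup>2" unfolding Mf_def by (rule Mf_le[OF f0 lam])
        then show "hy u \<le> g u" unfolding hyeq g_def norm_minus_commute[of y u] by simp
      qed
      then have "hy x \<le> conv_env g x" unfolding ce by (rule cSUP_upper[OF _ Hb])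
      then show ?thesis unfolding hyeq by simp
    qed
    then have "G \<le> conv_env g x - lam * (norm x)\<^sup>2" unfolding G_def by (intro cSUP_least) auto
    then show ?thesis by simp
  qed
  ultimately have "conv_env g x = G + lam * (norm x)\<^sup>2" by simp
  then show ?thesis unfolding lower_comp_def g_def[abs_def] G_def Mf_def by simp
qed

lemma dom_eq:
  fixes f :: "'a::euclidean_space \<Rightarrow> real"
  assumes f0: "\<forall>z. f z \<ge> 0" and lam: "lam > 0" and fA: "\<forall>z. z \<notin> A \<longrightarrow> f z = 0"
    and AO: "A \<subseteq> \<Omega>" and oO: "open \<Omega>" and x: "x \<in> closure \<Omega>"
  shows "lower_comp_dom lam \<Omega> f x = (SUP y. (INF z. f z + lam * (norm (z - y))\<^sup>2) - lam * (norm (y - x))\<^sup>2)"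
proof -
  define Mf where "Mf y = (INF z. f z + lam * (norm (z - y))\<^sup>2)" for y
  have cne: "closure \<Omega> \<noteq> {}" using x by auto
  have le: "lower_env lam \<Omega> f y = Mf y" if y: "y \<in> closure \<Omega>" for y
  proof (rule antisym)
    have bb: "bdd_below ((\<lambda>z. f z + lam * (norm (z - y))\<^sup>2) ` closure \<Omega>)"
      using f0 lam by (intro bdd_belowI[of _ 0]) auto
    show "lower_env lam \<Omega> f y \<le> Mf y" unfolding Mf_def lower_env_def
    proof (rule cINF_greatest)
      fix z
      show "(INF z\<in>closure \<Omega>. f z + lam * (norm (z - y))\<^sup>2) \<le> f z + lam * (norm (z - y))\<^sup>2"
      proof (cases "z \<in> closure \<Omega>")
        case True
        then show ?thesis by (rule cINF_lower[OF bb])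
      next
        case False
        have "closed_segment y z \<inter> frontier (closure \<Omega>) \<noteq> {}"
          by (rule connected_Int_frontier) (use y False in auto)
        then obtain w where w1: "w \<in> closed_segment y z" and w2: "w \<in> frontier (closure \<Omega>)" by blast
        have wc: "w \<in> closure \<Omega>" using w2 frontier_subset_closed[of "closure \<Omega>"] by auto
        have "\<Omega> \<subseteq> interior (closure \<Omega>)" using oO by (simp add: interior_maximal closure_subset)
        then have "w \<notin> \<Omega>" using w2 by (auto simp: frontier_def)
        then have fw: "f w = 0" using fA AO by auto
        have "dist w y \<le> dist y z" using dist_in_closed_segment[OF w1] by simp
        then have "norm (w - y) \<le> norm (z - y)" by (simp add: dist_norm norm_minus_commute)
        then have "lam * (norm (w - y))\<^sup>2 \<le> lam * (norm (z - y))\<^sup>2"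
          using lam by (intro mult_left_mono power_mono) auto
        moreover have "(INF z\<in>closure \<Omega>. f z + lam * (norm (z - y))\<^sup>2) \<le> f w + lam * (norm (w - y))\<^sup>2"
          by (rule cINF_lower[OF bb wc])
        moreover have "0 \<le> f z" using f0 by simp
        ultimately show ?thesis using fw by linarith
      qed
    qed simp
    show "Mf y \<le> lower_env lam \<Omega> f y" unfolding Mf_def lower_env_def
      by (rule cINF_greatest[OF cne]) (rule cINF_lower[OF Mf_bdd[OF f0 lam]], simp)
  qed
  have "lower_comp_dom lam \<Omega> f x = (SUP y\<in>closure \<Omega>. Mf y - lam * (norm (y - x))\<^sup>2)"
    unfolding lower_comp_dom_def upper_env_def by (rule SUP_cong) (auto simp: le)
  also have "\<dots> = (SUP y. Mf y - lam * (norm (y - x))\<^sup>2)"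
  proof (rule antisym)
    have b1: "bdd_above ((\<lambda>y. Mf y - lam * (norm (y - x))\<^sup>2) ` closure \<Omega>)"
      unfolding Mf_def by (rule G_bdd[OF f0 lam])
    have b2: "bdd_above (range (\<lambda>y. Mf y - lam * (norm (y - x))\<^sup>2))"
      unfolding Mf_def by (rule G_bdd[OF f0 lam])
    show "(SUP y\<in>closure \<Omega>. Mf y - lam * (norm (y - x))\<^sup>2) \<le> (SUP y. Mf y - lam * (norm (y - x))\<^sup>2)"
      by (rule cSUP_least[OF cne]) (rule cSUP_upper[OF _ b2], simp)
    show "(SUP y. Mf y - lam * (norm (y - x))\<^sup>2) \<le> (SUP y\<in>closure \<Omega>. Mf y - lam * (norm (y - x))\<^sup>2)"
    proof (rule cSUP_least)
      fix y
      show "Mf y - lam * (norm (y - x))\<^sup>2 \<le> (SUP y\<in>closure \<Omega>. Mf y - lam * (norm (y - x))\<^sup>2)"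
      proof (cases "y \<in> closure \<Omega>")
        case True
        then show ?thesis by (rule cSUP_upper[OF _ b1])
      next
        case False
        then have "y \<notin> A" using AO closure_subset by blast
        then have "Mf y \<le> 0" using Mf_le[OF f0 lam, of y y] fA unfolding Mf_def by simp
        moreover have "0 \<le> Mf x" unfolding Mf_def by (rule Mf_nonneg[OF f0 lam])
        moreover have "Mf x - lam * (norm (x - x))\<^sup>2 \<le> (SUP y\<in>closure \<Omega>. Mf y - lam * (norm (y - x))\<^sup>2)"
          by (rule cSUP_upper[OF x b1])
        moreover have "0 \<le> lam * (norm (y - x))\<^sup>2" using lam by simp
        ultimately show ?thesis by simp
      qed
    qed simp
  qed
  finally show ?thesis unfolding Mf_def .
qed

theorem corollary3p5:
  fixes \<Omega> A :: "'a::euclidean_space set" and lam :: real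
  assumes "open \<Omega>" and "bounded \<Omega>"
    and "open A" and "A \<noteq> {}" and "A \<subseteq> \<Omega>"
    and "lam > 0"
  defines "f \<equiv> dist2 (- A)"
  defines "fm \<equiv> (\<lambda>x. if x \<in> \<Omega> then f x else (INF y \<in> \<Omega>. f y))"
  shows "\<forall>x \<in> closure \<Omega>.
           Mtrans lam (- A) x = (1 + lam) * (fm x - lower_comp_dom lam \<Omega> fm x)"
proof -
  have f0: "\<forall>z. f z \<ge> 0" unfolding f_def dist2_def by simp
  have fA: "\<forall>z. z \<notin> A \<longrightarrow> f z = 0" unfolding f_def dist2_def by simp
  have fc: "continuous_on UNIV f" unfolding f_def dist2_def[abs_def] by (intro continuous_intros)
  have One: "\<Omega> \<noteq> {}" using assms(4,5) by auto
  have "\<Omega> \<noteq> UNIV" using assms(2) not_bounded_UNIV by auto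
  with One obtain w where w: "w \<in> frontier \<Omega>" using frontier_eq_empty by blast
  have wO: "w \<notin> \<Omega>" "w \<in> closure \<Omega>" using w assms(1) by (auto simp: frontier_def interior_open)
  have inf0: "(INF y \<in> \<Omega>. f y) = 0"
  proof (rule antisym)
    show "0 \<le> (INF y \<in> \<Omega>. f y)" using f0 by (intro cINF_greatest[OF One]) auto
    show "(INF y \<in> \<Omega>. f y) \<le> 0"
    proof (rule ccontr)
      define m where "m = (INF y \<in> \<Omega>. f y)"
      assume "\<not> (INF y \<in> \<Omega>. f y) \<le> 0"
      then have m: "m > 0" unfolding m_def by simp
      have bO: "bdd_below (f ` \<Omega>)" using f0 by (intro bdd_belowI[of _ 0]) auto
      have "\<Omega> \<subseteq> {u. m \<le> f u}" unfolding m_def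
        using cINF_lower[OF bO] by auto
      moreover have "closed {u. m \<le> f u}"
        by (rule closed_Collect_le) (use fc in auto)
      ultimately have "closure \<Omega> \<subseteq> {u. m \<le> f u}" by (rule closure_minimal)
      then have "m \<le> f w" using wO by auto
      moreover have "f w = 0" using fA wO assms(5) by auto
      ultimately show False using m by simp
    qed
  qed
  have fmf: "fm = f" unfolding fm_def inf0 using fA assms(5) by (auto simp: fun_eq_iff)
  show ?thesis
  proof
    fix x assume x: "x \<in> closure \<Omega>"
    have "lower_comp_dom lam \<Omega> f x = lower_comp lam f x"
      unfolding dom_eq[OF f0 assms(6) fA assms(5,1) x] prox[OF f0 assms(6)] ..
    then show "Mtrans lam (- A) x = (1 + lam) * (fm x - lower_comp_dom lam \<Omega> fm x)"
      unfolding fmf Mtrans_def f_def by simp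
  qed
qed

end
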